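(* Let $G$ be a linear system with generalized state-space realization $\dot{x}=Ax+\hat{A}w+Bu$, $w=\bar{A}x+\tilde{A}w+\bar{B}u$, $y=Cx+\bar{C}w+Du$ (with $I-\tilde{A}$ invertible) and complete computational structure $\mathcal{C}$. Then the subsystem structure $\mathcal{S}$ of $G$ is unique; equivalently, there is a unique admissible partition of the vertex set $V(\mathcal{C})$ of maximal cardinality.
   Context: Here $u\in\mathbb{R}^m$ are inputs, $x\in\mathbb{R}^n$ states, $w\in\mathbb{R}^l$ auxiliary variables, $y\in\mathbb{R}^p$ outputs. The complete computational structure $\mathcal{C}$ is the directed graph with one vertex for each input $u_i$, each state (vertex $f_j$, producing $x_j$), each auxiliary variable (vertex $g_k$, producing $w_k$) and each output (vertex $h_r$, producing $y_r$); there is an edge from vertex $a$ to vertex $b$, labelled by the variable produced by $a$, whenever the function defining the variable associated with $b$ depends on the variable produced by $a$ (for linear equations: the corresponding coefficient is nonzero). Inputs and outputs are manifest variables; states are hidden; an auxiliary variable is hidden unless it is manifest, i.e. passed directly out as an output (e.g. $y_r=w_k$). A partition of $V(\mathcal{C})$ is admissible if every edge of $\mathcal{C}$ between distinct components of the partition represents a manifest (not hidden) variable. The subsystem structure $\mathcal{S}$ is the condensation graph of $\mathcal{C}$ whose vertices $S_1,\dots,S_q$ are the components of an admissible partition of $V(\mathcal{C})$ of maximal cardinality, with an edge $(S_i,S_j)$ whenever $\mathcal{C}$ has an edge from some vertex of $S_i$ to some vertex of $S_j$; vertices are labelled by the transfer function of the associated subsystem and edges by the associated variable. *)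

theory Defs
  imports "Jordan_Normal_Form.Matrix" "HOL-Library.Disjoint_Sets"
begin

text \<open>Vertices of the complete computational structure: one per input u_i,
  state (vertex f_j), auxiliary variable (vertex g_k) and output (vertex h_r).\<close>
datatype vtx = Inp nat | St nat | Aux nat | Out nat

definition ccs_vertices :: "nat \<Rightarrow> nat \<Rightarrow> nat \<Rightarrow> nat \<Rightarrow> vtx set" where
  "ccs_vertices m n l p = Inp ` {..<m} \<union> St ` {..<n} \<union> Aux ` {..<l} \<union> Out ` {..<p}"

text \<open>An edge a -> b exists iff the equation defining the variable of b has a nonzero
  coefficient at the variable produced by a.\<close>
fun ccs_edge :: "real mat \<Rightarrow> real mat \<Rightarrow> real mat \<Rightarrow> real mat \<Rightarrow> real mat \<Rightarrow> real mat
    \<Rightarrow> real mat \<Rightarrow> real mat \<Rightarrow> real mat \<Rightarrow> vtx \<Rightarrow> vtx \<Rightarrow> bool" where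
  "ccs_edge A Ahat B Abar Atilde Bbar C Cbar D (Inp i) (St j) =
     (i < dim_col B \<and> j < dim_row B \<and> B $$ (j, i) \<noteq> 0)"
| "ccs_edge A Ahat B Abar Atilde Bbar C Cbar D (Inp i) (Aux k) =
     (i < dim_col Bbar \<and> k < dim_row Bbar \<and> Bbar $$ (k, i) \<noteq> 0)"
| "ccs_edge A Ahat B Abar Atilde Bbar C Cbar D (Inp i) (Out r) =
     (i < dim_col D \<and> r < dim_row D \<and> D $$ (r, i) \<noteq> 0)"
| "ccs_edge A Ahat B Abar Atilde Bbar C Cbar D (St j) (St j') =
     (j < dim_col A \<and> j' < dim_row A \<and> A $$ (j', j) \<noteq> 0)"
| "ccs_edge A Ahat B Abar Atilde Bbar C Cbar D (St j) (Aux k) =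
     (j < dim_col Abar \<and> k < dim_row Abar \<and> Abar $$ (k, j) \<noteq> 0)"
| "ccs_edge A Ahat B Abar Atilde Bbar C Cbar D (St j) (Out r) =
     (j < dim_col C \<and> r < dim_row C \<and> C $$ (r, j) \<noteq> 0)"
| "ccs_edge A Ahat B Abar Atilde Bbar C Cbar D (Aux k) (St j) =
     (k < dim_col Ahat \<and> j < dim_row Ahat \<and> Ahat $$ (j, k) \<noteq> 0)"
| "ccs_edge A Ahat B Abar Atilde Bbar C Cbar D (Aux k) (Aux k') =
     (k < dim_col Atilde \<and> k' < dim_row Atilde \<and> Atilde $$ (k', k) \<noteq> 0)"
| "ccs_edge A Ahat B Abar Atilde Bbar C Cbar D (Aux k) (Out r) =
     (k < dim_col Cbar \<and> r < dim_row Cbar \<and> Cbar $$ (r, k) \<noteq> 0)"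
| "ccs_edge A Ahat B Abar Atilde Bbar C Cbar D _ _ = False"

text \<open>Auxiliary variable w_k is manifest iff some output equation reads y_r = w_k.\<close>
definition manifest_aux :: "real mat \<Rightarrow> real mat \<Rightarrow> real mat \<Rightarrow> nat \<Rightarrow> bool" where
  "manifest_aux C Cbar D k =
     (\<exists>r < dim_row Cbar.
        (\<forall>j < dim_col C. C $$ (r, j) = 0) \<and>
        (\<forall>k' < dim_col Cbar. Cbar $$ (r, k') = (if k' = k then 1 else 0)) \<and>
        (\<forall>i < dim_col D. D $$ (r, i) = 0))"

text \<open>Whether the variable produced by a vertex (the label of its out-edges) is hidden:
  states are hidden, auxiliary variables are hidden unless manifest, inputs and
  outputs are manifest.\<close>
fun hidden_var :: "real mat \<Rightarrow> real mat \<Rightarrow> real mat \<Rightarrow> vtx \<Rightarrow> bool" where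
  "hidden_var C Cbar D (Inp i) = False"
| "hidden_var C Cbar D (St j) = True"
| "hidden_var C Cbar D (Aux k) = (\<not> manifest_aux C Cbar D k)"
| "hidden_var C Cbar D (Out r) = False"

definition admissible_partition ::
  "vtx set \<Rightarrow> (vtx \<Rightarrow> vtx \<Rightarrow> bool) \<Rightarrow> (vtx \<Rightarrow> bool) \<Rightarrow> vtx set set \<Rightarrow> bool" where
  "admissible_partition V E hid P =
     (partition_on V P \<and>
      (\<forall>a b S T. E a b \<longrightarrow> S \<in> P \<longrightarrow> T \<in> P \<longrightarrow> a \<in> S \<longrightarrow> b \<in> T \<longrightarrow> S \<noteq> T \<longrightarrow> \<not> hid a))"

definition max_admissible_partition ::
  "vtx set \<Rightarrow> (vtx \<Rightarrow> vtx \<Rightarrow> bool) \<Rightarrow> (vtx \<Rightarrow> bool) \<Rightarrow> vtx set set \<Rightarrow> bool" where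
  "max_admissible_partition V E hid P =
     (admissible_partition V E hid P \<and>
      (\<forall>Q. admissible_partition V E hid Q \<longrightarrow> card Q \<le> card P))"

end

theory Submission
  imports Defs
begin

lemma same_block:
  assumes adm: "admissible_partition V E hid Q"
    and r: "(a,b) \<in> (S0 \<union> S0\<inverse>)\<^sup>*"
    and S0: "S0 = {(a,b). a\<in>V \<and> b\<in>V \<and> E a b \<and> hid a}"
    and Y: "Y \<in> Q" "a \<in> Y"
  shows "b \<in> Y"
  using r
proof (induction rule: rtrancl_induct)
  case base then show ?case using Y by simp
next
  case (step b c)
  have pV: "partition_on V Q" and ad: "\<And>a b S T. E a b \<Longrightarrow> S \<in> Q \<Longrightarrow> T \<in> Q \<Longrightarrow> a \<in> S \<Longrightarrow> b \<in> T \<Longrightarrow> S \<noteq> T \<Longrightarrow> \<not> hid a"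
    using adm unfolding admissible_partition_def by blast+
  have cV: "c \<in> V" using step(2) S0 by auto
  then obtain T where T: "T \<in> Q" "c \<in> T" using partition_onD1[OF pV] by blast
  show ?case
  proof (cases "T = Y")
    case True then show ?thesis using T by simp
  next
    case False
    from step(2) have "(b,c) \<in> S0 \<or> (c,b) \<in> S0" by auto
    then show ?thesis
    proof
      assume "(b,c) \<in> S0"
      then have "E b c" "hid b" using S0 by auto
      with ad[OF this(1) Y(1) T(1) step(3) T(2)] False show ?thesis by auto
    next
      assume "(c,b) \<in> S0"
      then have "E c b" "hid c" using S0 by auto
      with ad[OF this(1) T(1) Y(1) T(2) step(3)] False show ?thesis by auto
    qed
  qed
qed

lemma generic:
  assumes fin: "finite V"
  shows "\<exists>!P. max_admissible_partition V E hid P"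
proof -
  define S0 where "S0 = {(a,b). a\<in>V \<and> b\<in>V \<and> E a b \<and> hid a}"
  define R where "R = {(a,b). a\<in>V \<and> b\<in>V \<and> (a,b) \<in> (S0 \<union> S0\<inverse>)\<^sup>*}"
  define P0 where "P0 = V // R"
  have eq: "equiv V R"
  proof (rule equivI)
    show "refl_on V R" unfolding refl_on_def R_def by auto
    have "sym ((S0 \<union> S0\<inverse>)\<^sup>*)" by (rule sym_rtrancl) (auto simp: sym_def)
    then show "sym R" unfolding sym_def R_def by blast
    show "trans R" unfolding trans_def R_def by auto
    show "R \<subseteq> V \<times> V" unfolding R_def by auto
  qed
  have pP0: "partition_on V P0" unfolding P0_def using eq by (rule partition_on_quotient)
  have finP0: "finite P0" using finite_elements[OF fin pP0] .
  have admP0: "admissible_partition V E hid P0"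
    unfolding admissible_partition_def
  proof (intro conjI pP0 allI impI)
    fix a b X Y
    assume e: "E a b" and X: "X \<in> P0" and Y: "Y \<in> P0" and a: "a \<in> X" and b: "b \<in> Y" and ne: "X \<noteq> Y"
    show "\<not> hid a"
    proof
      assume h: "hid a"
      have aV: "a \<in> V" and bV: "b \<in> V" using X Y a b in_quotient_imp_subset[OF eq] unfolding P0_def by blast+
      have "(a,b) \<in> R" unfolding R_def S0_def using aV bV e h by auto
      then have "b \<in> X" using in_quotient_imp_closed[OF eq] X a unfolding P0_def by blast
      then show False using quotient_disj[OF eq] X Y b ne unfolding P0_def by blast
    qed
  qed
  have key: "card Q \<le> card P0 \<and> (card Q = card P0 \<longrightarrow> Q = P0)"
    if adm: "admissible_partition V E hid Q" for Q
  proof -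
    have pQ: "partition_on V Q" using adm unfolding admissible_partition_def by blast
    have sub: "\<exists>Y\<in>Q. X \<subseteq> Y" if X: "X \<in> P0" for X
    proof -
      obtain x where x: "X = R``{x}" "x \<in> V" using X unfolding P0_def by (auto elim: quotientE)
      obtain Y where Y: "Y \<in> Q" "x \<in> Y" using partition_onD1[OF pQ] x(2) by blast
      have "X \<subseteq> Y"
      proof
        fix z assume "z \<in> X"
        then have "(x,z) \<in> (S0 \<union> S0\<inverse>)\<^sup>*" using x unfolding R_def by auto
        then show "z \<in> Y" using same_block[OF adm _ S0_def Y] by blast
      qed
      then show ?thesis using Y by blast
    qed
    define g where "g X = (SOME Y. Y \<in> Q \<and> X \<subseteq> Y)" for X
    have g: "g X \<in> Q \<and> X \<subseteq> g X" if "X \<in> P0" for X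
      unfolding g_def using sub[OF that] by (metis (mono_tags, lifting) someI_ex)
    have disjQ: "\<And>Y Y'. Y \<in> Q \<Longrightarrow> Y' \<in> Q \<Longrightarrow> y \<in> Y \<Longrightarrow> y \<in> Y' \<Longrightarrow> Y = Y'" for y
      using partition_onD2[OF pQ] unfolding disjoint_def by blast
    have surj: "g ` P0 = Q"
    proof
      show "g ` P0 \<subseteq> Q" using g by blast
      show "Q \<subseteq> g ` P0"
      proof
        fix Y assume Y: "Y \<in> Q"
        then obtain y where y: "y \<in> Y" using partition_onD3[OF pQ] by (metis ex_in_conv)
        then have "y \<in> V" using partition_onD1[OF pQ] Y by blast
        then obtain X where X: "X \<in> P0" "y \<in> X" using partition_onD1[OF pP0] by blast
        then have "g X = Y" using g[OF X(1)] disjQ[OF _ Y _ y] by blast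
        then show "Y \<in> g ` P0" using X by blast
      qed
    qed
    have le: "card Q \<le> card P0" using card_image_le[OF finP0, of g] surj by simp
    moreover have "Q = P0" if c: "card Q = card P0"
    proof -
      have inj: "inj_on g P0" using c surj finP0 by (metis eq_card_imp_inj_on)
      have gid: "g X = X" if X: "X \<in> P0" for X
      proof
        show "X \<subseteq> g X" using g[OF X] by blast
        show "g X \<subseteq> X"
        proof
          fix y assume y: "y \<in> g X"
          then have "y \<in> V" using partition_onD1[OF pQ] g[OF X] by blast
          then obtain X' where X': "X' \<in> P0" "y \<in> X'" using partition_onD1[OF pP0] by blast
          then have "g X' = g X" using g[OF X'(1)] g[OF X] disjQ[of "g X'" "g X" y] y by blast
          then have "X' = X" using inj X X' unfolding inj_on_def by blast
          then show "y \<in> X" using X' by blast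
        qed
      qed
      show ?thesis using surj gid by (simp add: image_cong[OF refl gid])
    qed
    ultimately show ?thesis by blast
  qed
  show ?thesis
  proof (rule ex1I[of _ P0])
    show "max_admissible_partition V E hid P0"
      unfolding max_admissible_partition_def using admP0 key by blast
  next
    fix Q assume "max_admissible_partition V E hid Q"
    then have "admissible_partition V E hid Q" "card P0 \<le> card Q"
      unfolding max_admissible_partition_def using admP0 by blast+
    then show "Q = P0" using key by (meson le_antisym)
  qed
qed

theorem lemma2:
  fixes A Ahat B Abar Atilde Bbar C Cbar D :: "real mat" and m n l p :: nat
  assumes "A \<in> carrier_mat n n" and "Ahat \<in> carrier_mat n l" and "B \<in> carrier_mat n m"
    and "Abar \<in> carrier_mat l n" and "Atilde \<in> carrier_mat l l" and "Bbar \<in> carrier_mat l m"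
    and "C \<in> carrier_mat p n" and "Cbar \<in> carrier_mat p l" and "D \<in> carrier_mat p m"
    and "invertible_mat (1\<^sub>m l - Atilde)"
  shows "\<exists>!P. max_admissible_partition (ccs_vertices m n l p)
                (ccs_edge A Ahat B Abar Atilde Bbar C Cbar D) (hidden_var C Cbar D) P"
  by (rule generic) (simp add: ccs_vertices_def)

end
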